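(* For every finite word $\bar\alpha\in\{0,1\}^k$, $k\in\mathbb N$, the sets $F_{\bar\alpha}=T_{\bar\alpha}(I)$ and $\mathcal K_{\bar\alpha}$ are connected.
   Context: Let $I=[0,1]^3$. Let $\mathcal D_0=\{(i,2,2),(2,i,2),(2,2,i): i=0,1,2,3,4\}$ and $\mathcal D_1=\{d\in\{0,\ldots,4\}^3:\ \text{at least two coordinates of } d \text{ lie in }\{0,4\}\}$. For $i=0,1$ let $T_i(A)=\bigcup_{d\in\mathcal D_i}\frac{d+A}{5}$ for $A\subset\mathbb R^3$, and for $\bar\alpha=\alpha_1\cdots\alpha_k$ let $T_{\bar\alpha}=T_{\alpha_1}\circ\cdots\circ T_{\alpha_k}$. $\mathcal K_{\bar\alpha}$ is the unique non-empty compact set with $\mathcal K_{\bar\alpha}=T_{\bar\alpha}(\mathcal K_{\bar\alpha})$ (the attractor of the iterated function system whose Hutchinson operator is $T_{\bar\alpha}$). *)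

theory Defs
  imports "HOL-Analysis.Analysis"
begin

definition cubeI :: "(real ^ 3) set" where
  "cubeI = cbox (vec 0) (vec 1)"

definition vec3 :: "nat \<times> nat \<times> nat \<Rightarrow> real ^ 3" where
  "vec3 d = (case d of (a, b, c) \<Rightarrow> vector [real a, real b, real c])"

definition digits0 :: "(nat \<times> nat \<times> nat) set" where
  "digits0 = {(i, 2, 2) | i. i \<le> 4} \<union> {(2, i, 2) | i. i \<le> 4} \<union> {(2, 2, i) | i. i \<le> 4}"

definition digits1 :: "(nat \<times> nat \<times> nat) set" where
  "digits1 = {(a, b, c). a \<le> 4 \<and> b \<le> 4 \<and> c \<le> 4 \<and>
      ((a \<in> {0, 4} \<and> b \<in> {0, 4}) \<or> (a \<in> {0, 4} \<and> c \<in> {0, 4}) \<or> (b \<in> {0, 4} \<and> c \<in> {0, 4}))}"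

definition digits :: "nat \<Rightarrow> (nat \<times> nat \<times> nat) set" where
  "digits i = (if i = 0 then digits0 else digits1)"

definition Tmap :: "nat \<Rightarrow> (real ^ 3) set \<Rightarrow> (real ^ 3) set" where
  "Tmap i A = (\<Union>d\<in>digits i. (\<lambda>x. (1/5) *\<^sub>R (vec3 d + x)) ` A)"

definition Tword :: "nat list \<Rightarrow> (real ^ 3) set \<Rightarrow> (real ^ 3) set" where
  "Tword w = foldr (\<lambda>a f. Tmap a \<circ> f) w id"

definition Fset :: "nat list \<Rightarrow> (real ^ 3) set" where
  "Fset w = Tword w cubeI"

definition Kset :: "nat list \<Rightarrow> (real ^ 3) set" where
  "Kset w = (THE K. compact K \<and> K \<noteq> {} \<and> K = Tword w K)"

end

theory Submission imports Defs begin

definition ex :: "real^3" where "ex = vector [1,0,0]"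
definition ey :: "real^3" where "ey = vector [0,1,0]"
definition ez :: "real^3" where "ez = vector [0,0,1]"

lemma vec3_simp: "vec3 (a,b,c) = vector [real a, real b, real c]"
  by (simp add: vec3_def)

lemma vec3_sh1: "vec3 (Suc a, b, c) = vec3 (a,b,c) + ex"
  by (simp add: vec3_def ex_def vec_eq_iff forall_3 vector_3)
lemma vec3_sh2: "vec3 (a, Suc b, c) = vec3 (a,b,c) + ey"
  by (simp add: vec3_def ey_def vec_eq_iff forall_3 vector_3)
lemma vec3_sh3: "vec3 (a, b, Suc c) = vec3 (a,b,c) + ez"
  by (simp add: vec3_def ez_def vec_eq_iff forall_3 vector_3)

lemma vec3_4_1: "vec3 (4, b, c) = vec3 (0,b,c) + 4 *\<^sub>R ex"
  by (simp add: vec3_def ex_def vec_eq_iff forall_3 vector_3)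
lemma vec3_4_2: "vec3 (a, 4, c) = vec3 (a,0,c) + 4 *\<^sub>R ey"
  by (simp add: vec3_def ey_def vec_eq_iff forall_3 vector_3)
lemma vec3_4_3: "vec3 (a, b, 4) = vec3 (a,b,0) + 4 *\<^sub>R ez"
  by (simp add: vec3_def ez_def vec_eq_iff forall_3 vector_3)

lemma digits_bound: "d \<in> digits i \<Longrightarrow> fst d \<le> 4 \<and> fst (snd d) \<le> 4 \<and> snd (snd d) \<le> 4"
  by (auto simp: digits_def digits0_def digits1_def split: if_splits)

lemma digits_finite: "finite (digits i)"
proof -
  have "digits i \<subseteq> {..4} \<times> {..4} \<times> {..4}"
    using digits_bound by fastforce
  then show ?thesis by (rule finite_subset) auto
qed

lemma digits_ne: "digits i \<noteq> {}"
proof -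
  have "(2,2,2) \<in> digits0" "(0,0,0) \<in> digits1" by (auto simp: digits0_def digits1_def)
  then show ?thesis by (auto simp: digits_def)
qed

lemma cube_mem: "x \<in> cubeI \<longleftrightarrow> (\<forall>k\<in>{1,2,3::3}. 0 \<le> x$k \<and> x$k \<le> 1)"
  by (simp add: cubeI_def mem_box_cart forall_3)

lemma Tmap_cube: "Tmap i cubeI \<subseteq> cubeI"
proof
  fix y assume "y \<in> Tmap i cubeI"
  then obtain d x where d: "d \<in> digits i" and x: "x \<in> cubeI" and y: "y = (1/5) *\<^sub>R (vec3 d + x)"
    by (auto simp: Tmap_def)
  obtain a b c where abc: "d = (a,b,c)" by (cases d) auto
  have "a \<le> 4" "b \<le> 4" "c \<le> 4" using digits_bound[OF d] abc by auto
  then show "y \<in> cubeI" using x unfolding y abc cube_mem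
    by (auto simp: vec3_def vector_3)
qed

lemma conn_graph:
  fixes S :: "'d \<Rightarrow> 'a::topological_space set"
  assumes cS: "\<And>d. d \<in> D \<Longrightarrow> connected (S d)" and dz: "dz \<in> D" and ne: "S dz \<noteq> {}"
    and int: "\<And>d d'. (d,d') \<in> R \<Longrightarrow> S d \<inter> S d' \<noteq> {}"
    and reach: "\<And>d. d \<in> D \<Longrightarrow> (dz,d) \<in> R\<^sup>*" and RD: "R \<subseteq> D \<times> D"
  shows "connected (\<Union>d\<in>D. S d)"
proof -
  have ex: "\<exists>C. connected C \<and> S dz \<subseteq> C \<and> S d \<subseteq> C \<and> C \<subseteq> (\<Union>d\<in>D. S d)" if "(dz,d) \<in> R\<^sup>*" for d
    using that
  proof (induction rule: rtrancl_induct)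
    case base
    show ?case using cS dz by blast
  next
    case (step y z)
    then obtain C where C: "connected C" "S dz \<subseteq> C" "S y \<subseteq> C" "C \<subseteq> (\<Union>d\<in>D. S d)" by blast
    have z: "z \<in> D" using step(2) RD by blast
    have "S y \<inter> S z \<noteq> {}" using int step(2) by blast
    then have "C \<inter> S z \<noteq> {}" using C by blast
    then have "connected (C \<union> S z)" using connected_Un C cS z by blast
    then show ?case using C z by blast
  qed
  then obtain C where C: "\<And>d. d \<in> D \<Longrightarrow> connected (C d) \<and> S dz \<subseteq> C d \<and> S d \<subseteq> C d \<and> C d \<subseteq> (\<Union>d\<in>D. S d)"
    using reach by metis
  have eq: "(\<Union>d\<in>D. S d) = \<Union>(C ` D)" using C by blast
  have "connected (\<Union>(C ` D))"
  proof (rule connected_Union)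
    show "\<And>s. s \<in> C ` D \<Longrightarrow> connected s" using C by blast
    show "\<Inter>(C ` D) \<noteq> {}" using C ne dz by blast
  qed
  then show ?thesis using eq by simp
qed

definition nb :: "nat \<times> nat \<times> nat \<Rightarrow> nat \<times> nat \<times> nat \<Rightarrow> bool" where
  "nb d d' \<longleftrightarrow> (case d of (a,b,c) \<Rightarrow> d' = (Suc a,b,c) \<or> d' = (a,Suc b,c) \<or> d' = (a,b,Suc c))"

definition adjR :: "(nat \<times> nat \<times> nat) set \<Rightarrow> ((nat \<times> nat \<times> nat) \<times> (nat \<times> nat \<times> nat)) set" where
  "adjR D = {(d,d'). d \<in> D \<and> d' \<in> D \<and> (nb d d' \<or> nb d' d)}"

lemma adjR_sym: "(x,y) \<in> (adjR D)\<^sup>* \<Longrightarrow> (y,x) \<in> (adjR D)\<^sup>*"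
proof -
  have c: "(adjR D)\<inverse> = adjR D" by (auto simp: adjR_def)
  assume "(x,y) \<in> (adjR D)\<^sup>*"
  then have "(y,x) \<in> ((adjR D)\<inverse>)\<^sup>*" by (simp add: rtrancl_converse)
  then show ?thesis using c by simp
qed

lemma line1_0: "(\<forall>t\<le>n. (t,b,c) \<in> D) \<Longrightarrow> x \<le> n \<Longrightarrow> ((0,b,c),(x,b,c)) \<in> (adjR D)\<^sup>*"
proof (induction x)
  case 0 then show ?case by simp
next
  case (Suc x)
  have "((x,b,c),(Suc x,b,c)) \<in> adjR D" using Suc.prems by (auto simp: adjR_def nb_def)
  then show ?case using Suc by (meson Suc_leD rtrancl_into_rtrancl)
qed
lemma line2_0: "(\<forall>t\<le>n. (a,t,c) \<in> D) \<Longrightarrow> x \<le> n \<Longrightarrow> ((a,0,c),(a,x,c)) \<in> (adjR D)\<^sup>*"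
proof (induction x)
  case 0 then show ?case by simp
next
  case (Suc x)
  have "((a,x,c),(a,Suc x,c)) \<in> adjR D" using Suc.prems by (auto simp: adjR_def nb_def)
  then show ?case using Suc by (meson Suc_leD rtrancl_into_rtrancl)
qed
lemma line3_0: "(\<forall>t\<le>n. (a,b,t) \<in> D) \<Longrightarrow> x \<le> n \<Longrightarrow> ((a,b,0),(a,b,x)) \<in> (adjR D)\<^sup>*"
proof (induction x)
  case 0 then show ?case by simp
next
  case (Suc x)
  have "((a,b,x),(a,b,Suc x)) \<in> adjR D" using Suc.prems by (auto simp: adjR_def nb_def)
  then show ?case using Suc by (meson Suc_leD rtrancl_into_rtrancl)
qed

lemma line1: "(\<forall>t\<le>n. (t,b,c) \<in> D) \<Longrightarrow> x \<le> n \<Longrightarrow> y \<le> n \<Longrightarrow> ((x,b,c),(y,b,c)) \<in> (adjR D)\<^sup>*"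
  by (meson adjR_sym line1_0 rtrancl_trans)
lemma line2: "(\<forall>t\<le>n. (a,t,c) \<in> D) \<Longrightarrow> x \<le> n \<Longrightarrow> y \<le> n \<Longrightarrow> ((a,x,c),(a,y,c)) \<in> (adjR D)\<^sup>*"
  by (meson adjR_sym line2_0 rtrancl_trans)
lemma line3: "(\<forall>t\<le>n. (a,b,t) \<in> D) \<Longrightarrow> x \<le> n \<Longrightarrow> y \<le> n \<Longrightarrow> ((a,b,x),(a,b,y)) \<in> (adjR D)\<^sup>*"
  by (meson adjR_sym line3_0 rtrancl_trans)

lemma reach0: "d \<in> digits0 \<Longrightarrow> ((2,2,2),d) \<in> (adjR digits0)\<^sup>*"
proof -
  have L1: "\<forall>t\<le>4. (t,2,2) \<in> digits0" "\<forall>t\<le>4. (2,t,2) \<in> digits0" "\<forall>t\<le>4. (2,2,t) \<in> digits0"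
    by (auto simp: digits0_def)
  assume "d \<in> digits0"
  then consider i where "i \<le> 4" "d = (i,2,2)" | i where "i \<le> 4" "d = (2,i,2)" | i where "i \<le> 4" "d = (2,2,i)"
    by (auto simp: digits0_def)
  then show ?thesis
  proof cases
    case 1 then show ?thesis using line1[OF L1(1), of 2 i] by simp
  next
    case 2 then show ?thesis using line2[OF L1(2), of 2 i] by simp
  next
    case 3 then show ?thesis using line3[OF L1(3), of 2 i] by simp
  qed
qed

lemma reach1: "d \<in> digits1 \<Longrightarrow> ((0,0,0),d) \<in> (adjR digits1)\<^sup>*"
proof -
  assume d: "d \<in> digits1"
  obtain a b c where abc: "d = (a,b,c)" by (cases d) auto
  have bd: "a \<le> 4" "b \<le> 4" "c \<le> 4" using d abc by (auto simp: digits1_def)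
  have m1: "\<forall>t\<le>4. (t,b,c) \<in> digits1" if "b \<in> {0,4}" "c \<in> {0,4}" for b c
    using that by (auto simp: digits1_def)
  have m2: "\<forall>t\<le>4. (a,t,c) \<in> digits1" if "a \<in> {0,4}" "c \<in> {0,4}" for a c
    using that by (auto simp: digits1_def)
  have m3: "\<forall>t\<le>4. (a,b,t) \<in> digits1" if "a \<in> {0,4}" "b \<in> {0,4}" for a b
    using that by (auto simp: digits1_def)
  have z: "(0::nat) \<in> {0,4}" by simp
  consider "b \<in> {0,4}" "c \<in> {0,4}" | "a \<in> {0,4}" "c \<in> {0,4}" | "a \<in> {0,4}" "b \<in> {0,4}"
    using d abc by (auto simp: digits1_def)
  then show ?thesis
  proof cases
    case 1
    have "((0,0,0),(0,b,0)) \<in> (adjR digits1)\<^sup>*" using line2[OF m2[OF z z], of 0 b] bd by simp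
    moreover have "((0,b,0),(0,b,c)) \<in> (adjR digits1)\<^sup>*" using line3[OF m3[OF z 1(1)], of 0 c] bd by simp
    moreover have "((0,b,c),(a,b,c)) \<in> (adjR digits1)\<^sup>*" using line1[OF m1[OF 1], of 0 a] bd by simp
    ultimately show ?thesis using abc by (meson rtrancl_trans)
  next
    case 2
    have "((0,0,0),(a,0,0)) \<in> (adjR digits1)\<^sup>*" using line1[OF m1[OF z z], of 0 a] bd by simp
    moreover have "((a,0,0),(a,0,c)) \<in> (adjR digits1)\<^sup>*" using line3[OF m3[OF 2(1) z], of 0 c] bd by simp
    moreover have "((a,0,c),(a,b,c)) \<in> (adjR digits1)\<^sup>*" using line2[OF m2[OF 2], of 0 b] bd by simp
    ultimately show ?thesis using abc by (meson rtrancl_trans)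
  next
    case 3
    have "((0,0,0),(a,0,0)) \<in> (adjR digits1)\<^sup>*" using line1[OF m1[OF z z], of 0 a] bd by simp
    moreover have "((a,0,0),(a,b,0)) \<in> (adjR digits1)\<^sup>*" using line2[OF m2[OF 3(1) z], of 0 b] bd by simp
    moreover have "((a,b,0),(a,b,c)) \<in> (adjR digits1)\<^sup>*" using line3[OF m3[OF 3], of 0 c] bd by simp
    ultimately show ?thesis using abc by (meson rtrancl_trans)
  qed
qed


definition piece :: "(real^3) set \<Rightarrow> nat \<times> nat \<times> nat \<Rightarrow> (real^3) set" where
  "piece A d = (\<lambda>x. (1/5) *\<^sub>R (vec3 d + x)) ` A"

definition Qinv :: "(real^3) set \<Rightarrow> bool" where
  "Qinv A \<longleftrightarrow> connected A \<and> (\<exists>p\<in>A. p + ex \<in> A) \<and> (\<exists>p\<in>A. p + ey \<in> A) \<and> (\<exists>p\<in>A. p + ez \<in> A)"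

lemma Tmap_piece: "Tmap i A = (\<Union>d\<in>digits i. piece A d)"
  by (simp add: Tmap_def piece_def)

lemma piece_conn: "connected A \<Longrightarrow> connected (piece A d)"
  unfolding piece_def by (intro connected_continuous_image continuous_intros)

lemma shift_eq: "(1/5) *\<^sub>R (v + p) + e = (1/5) *\<^sub>R ((v + 4 *\<^sub>R e) + (p + e))" for v p e :: "real^3"
  by (simp add: vec_eq_iff field_simps)

lemma shift_eq2: "(1/5) *\<^sub>R (v + (p + e)) = (1/5) *\<^sub>R ((v + e) + p)" for v p e :: "real^3"
  by (simp add: algebra_simps)

lemma nb_int:
  assumes Q: "Qinv A" and n: "nb d d'"
  shows "piece A d \<inter> piece A d' \<noteq> {}"
proof -
  obtain a b c where abc: "d = (a,b,c)" by (cases d) auto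
  have key: "piece A d \<inter> piece A d' \<noteq> {}" if "vec3 d' = vec3 d + e" "\<exists>p\<in>A. p + e \<in> A" for e
  proof -
    from that(2) obtain p where p: "p \<in> A" "p + e \<in> A" by blast
    have "(1/5) *\<^sub>R (vec3 d + (p + e)) \<in> piece A d" using p unfolding piece_def by blast
    moreover have "(1/5) *\<^sub>R (vec3 d + (p + e)) \<in> piece A d'"
      using p unfolding piece_def that(1) shift_eq2 by blast
    ultimately show ?thesis by blast
  qed
  from n abc consider "d' = (Suc a,b,c)" | "d' = (a,Suc b,c)" | "d' = (a,b,Suc c)"
    by (auto simp: nb_def)
  then show ?thesis
  proof cases
    case 1 then show ?thesis using key[of ex] Q abc vec3_sh1 by (auto simp: Qinv_def)
  next
    case 2 then show ?thesis using key[of ey] Q abc vec3_sh2 by (auto simp: Qinv_def)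
  next
    case 3 then show ?thesis using key[of ez] Q abc vec3_sh3 by (auto simp: Qinv_def)
  qed
qed

lemma adj_int: "Qinv A \<Longrightarrow> (d,d') \<in> adjR D \<Longrightarrow> piece A d \<inter> piece A d' \<noteq> {}"
  unfolding adjR_def using nb_int by blast

lemma pt_shift:
  assumes "d \<in> digits i" "d' \<in> digits i" "vec3 d' = vec3 d + 4 *\<^sub>R e" "\<exists>p\<in>A. p + e \<in> A"
  shows "\<exists>p\<in>Tmap i A. p + e \<in> Tmap i A"
proof -
  from assms(4) obtain p where p: "p \<in> A" "p + e \<in> A" by blast
  have "(1/5) *\<^sub>R (vec3 d + p) \<in> Tmap i A" using p assms(1) by (auto simp: Tmap_def)
  moreover have "(1/5) *\<^sub>R (vec3 d + p) + e \<in> Tmap i A"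
    unfolding shift_eq assms(3)[symmetric] using p assms(2) by (auto simp: Tmap_def)
  ultimately show ?thesis by blast
qed

lemma Qinv_Tmap:
  assumes Q: "Qinv A" shows "Qinv (Tmap i A)"
proof -
  have cA: "connected A" and neA: "A \<noteq> {}" using Q by (auto simp: Qinv_def)
  have conn: "connected (Tmap i A)"
  proof (cases "i = 0")
    case True
    have "connected (\<Union>d\<in>digits0. piece A d)"
    proof (rule conn_graph[where dz="(2,2,2)" and R="adjR digits0"])
      show "(2,2,2) \<in> digits0" by (auto simp: digits0_def)
    qed (use cA neA piece_conn adj_int[OF Q] reach0 in \<open>auto simp: adjR_def piece_def\<close>)
    then show ?thesis using True by (simp add: Tmap_piece digits_def)
  next
    case False
    have "connected (\<Union>d\<in>digits1. piece A d)"
    proof (rule conn_graph[where dz="(0,0,0)" and R="adjR digits1"])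
      show "(0,0,0) \<in> digits1" by (auto simp: digits1_def)
    qed (use cA neA piece_conn adj_int[OF Q] reach1 in \<open>auto simp: adjR_def piece_def\<close>)
    then show ?thesis using False by (simp add: Tmap_piece digits_def)
  qed
  have pts: "(\<exists>p\<in>Tmap i A. p + ex \<in> Tmap i A) \<and> (\<exists>p\<in>Tmap i A. p + ey \<in> Tmap i A) \<and> (\<exists>p\<in>Tmap i A. p + ez \<in> Tmap i A)"
  proof (cases "i = 0")
    case True
    have m: "(0,2,2) \<in> digits i" "(4,2,2) \<in> digits i" "(2,0,2) \<in> digits i" "(2,4,2) \<in> digits i"
      "(2,2,0) \<in> digits i" "(2,2,4) \<in> digits i" using True by (auto simp: digits_def digits0_def)
    show ?thesis using pt_shift[OF m(1,2) vec3_4_1] pt_shift[OF m(3,4) vec3_4_2] pt_shift[OF m(5,6) vec3_4_3] Q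
      by (auto simp: Qinv_def)
  next
    case False
    have m: "(0,0,0) \<in> digits i" "(4,0,0) \<in> digits i" "(0,4,0) \<in> digits i" "(0,0,4) \<in> digits i"
      using False by (auto simp: digits_def digits1_def)
    show ?thesis using pt_shift[OF m(1,2) vec3_4_1] pt_shift[OF m(1,3) vec3_4_2] pt_shift[OF m(1,4) vec3_4_3] Q
      by (auto simp: Qinv_def)
  qed
  show ?thesis using conn pts by (simp add: Qinv_def)
qed

lemma Qinv_cube: "Qinv cubeI"
proof -
  have c: "connected cubeI" unfolding cubeI_def by (simp add: convex_connected convex_box)
  have "vec 0 \<in> cubeI" "vec 0 + ex \<in> cubeI" "vec 0 + ey \<in> cubeI" "vec 0 + ez \<in> cubeI"
    by (auto simp: cube_mem ex_def ey_def ez_def vector_3)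
  then show ?thesis using c unfolding Qinv_def by (metis add_0 zero_vec_def)
qed

lemma Tword_Cons: "Tword (a # w) = Tmap a \<circ> Tword w"
  by (simp add: Tword_def)

lemma Qinv_Tword: "Qinv A \<Longrightarrow> Qinv (Tword w A)"
  by (induction w arbitrary: A) (auto simp: Tword_def Qinv_Tmap)


definition sims :: "real \<Rightarrow> ((real^3) \<Rightarrow> real^3) set \<Rightarrow> bool" where
  "sims r G \<longleftrightarrow> finite G \<and> G \<noteq> {} \<and> (\<forall>g\<in>G. \<exists>v. g = (\<lambda>x. r *\<^sub>R x + v))"

definition HT :: "((real^3) \<Rightarrow> real^3) set \<Rightarrow> (real^3) set \<Rightarrow> (real^3) set" where
  "HT G A = (\<Union>g\<in>G. g ` A)"

lemma Tword_rep: "\<exists>G. sims ((1/5)^length w) G \<and> (\<forall>A. Tword w A = HT G A)"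
proof (induction w)
  case Nil
  have "sims 1 {id}" by (auto simp: sims_def fun_eq_iff intro: exI[of _ 0])
  moreover have "\<forall>A. Tword [] A = HT {id} A" by (simp add: Tword_def HT_def)
  ultimately show ?case by auto
next
  case (Cons a w)
  then obtain G where G: "sims ((1/5)^length w) G" "\<forall>A. Tword w A = HT G A" by blast
  define G' where "G' = (\<lambda>(d,g). (\<lambda>x. (1/5) *\<^sub>R (vec3 d + x)) \<circ> g) ` (digits a \<times> G)"
  have "finite G'" using G(1) digits_finite unfolding G'_def sims_def by auto
  moreover have "G' \<noteq> {}" using G(1) digits_ne unfolding G'_def sims_def by auto
  moreover have "\<forall>g\<in>G'. \<exists>v. g = (\<lambda>x. (1/5)^length (a#w) *\<^sub>R x + v)"
  proof
    fix h assume "h \<in> G'"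
    then obtain d g where g: "g \<in> G" and h: "h = (\<lambda>x. (1/5) *\<^sub>R (vec3 d + x)) \<circ> g"
      unfolding G'_def by auto
    obtain v where v: "g = (\<lambda>x. (1/5)^length w *\<^sub>R x + v)" using G(1) g unfolding sims_def by blast
    have "h = (\<lambda>x. (1/5)^length (a#w) *\<^sub>R x + (1/5) *\<^sub>R (vec3 d + v))"
      unfolding h v by (simp add: fun_eq_iff algebra_simps)
    then show "\<exists>v. h = (\<lambda>x. (1/5)^length (a#w) *\<^sub>R x + v)" by blast
  qed
  ultimately have "sims ((1/5)^length (a#w)) G'" by (simp add: sims_def)
  moreover have "\<forall>A. Tword (a#w) A = HT G' A"
  proof
    fix A
    have "Tword (a#w) A = Tmap a (HT G A)" using G(2) by (simp add: Tword_Cons)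
    also have "\<dots> = HT G' A" unfolding Tmap_def HT_def G'_def by (auto simp: image_comp) blast
    finally show "Tword (a#w) A = HT G' A" .
  qed
  ultimately show ?case by blast
qed

lemma HT_mono: "A \<subseteq> B \<Longrightarrow> HT G A \<subseteq> HT G B"
  unfolding HT_def by blast

lemma HT_contract:
  assumes G: "sims r G" and r: "0 \<le> r" and AB: "\<forall>a\<in>A. \<exists>b\<in>B. dist a b \<le> e"
  shows "\<forall>a\<in>HT G A. \<exists>b\<in>HT G B. dist a b \<le> r * e"
proof
  fix y assume "y \<in> HT G A"
  then obtain g a where g: "g \<in> G" and a: "a \<in> A" and y: "y = g a" unfolding HT_def by blast
  obtain b where b: "b \<in> B" "dist a b \<le> e" using AB a by blast
  obtain v where v: "g = (\<lambda>x. r *\<^sub>R x + v)" using G g unfolding sims_def by blast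
  have "dist (g a) (g b) = r * dist a b"
    unfolding v dist_norm by (simp add: scaleR_diff_right[symmetric] r)
  also have "\<dots> \<le> r * e" using b r by (simp add: mult_left_mono)
  finally have "dist y (g b) \<le> r * e" using y by simp
  moreover have "g b \<in> HT G B" using g b unfolding HT_def by blast
  ultimately show "\<exists>b\<in>HT G B. dist y b \<le> r * e" by blast
qed

lemma HT_uniq:
  assumes G: "sims r G" and r: "0 < r" "r < 1"
    and K: "compact K" "K = HT G K" and K': "compact K'" "K' \<noteq> {}" "K' = HT G K'"
  shows "K \<subseteq> K'"
proof
  fix x assume x: "x \<in> K"
  obtain M1 where M1: "\<forall>y\<in>K. norm y \<le> M1" using compact_imp_bounded[OF K(1)] bounded_iff by blast
  obtain M2 where M2: "\<forall>y\<in>K'. norm y \<le> M2" using compact_imp_bounded[OF K'(1)] bounded_iff by blast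
  obtain b0 where b0: "b0 \<in> K'" using K'(2) by blast
  define B where "B = M1 + M2"
  have B0: "B \<ge> 0" using M1 M2 x b0 norm_ge_zero unfolding B_def by (meson add_nonneg_nonneg order.trans)
  have base: "\<forall>a\<in>K. \<exists>b\<in>K'. dist a b \<le> B"
  proof
    fix a assume a: "a \<in> K"
    have "dist a b0 \<le> norm a + norm b0" by (simp add: dist_norm norm_triangle_ineq4)
    also have "\<dots> \<le> B" using M1 M2 a b0 unfolding B_def by (simp add: add_mono)
    finally show "\<exists>b\<in>K'. dist a b \<le> B" using b0 by blast
  qed
  have iter: "\<forall>a\<in>K. \<exists>b\<in>K'. dist a b \<le> r^n * B" for n
  proof (induction n)
    case 0 then show ?case using base by simp
  next
    case (Suc n)
    from HT_contract[OF G _ Suc] r have "\<forall>a\<in>HT G K. \<exists>b\<in>HT G K'. dist a b \<le> r * (r ^ n * B)" by simp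
    then show ?case using K(2) K'(3) by (simp add: mult.assoc)
  qed
  have "\<forall>e>0. \<exists>y\<in>K'. dist y x < e"
  proof (intro allI impI)
    fix e :: real assume e: "e > 0"
    obtain n where n: "r^n < e / (B + 1)" using real_arch_pow_inv[of "e/(B+1)" r] e B0 r by auto
    obtain b where b: "b \<in> K'" "dist x b \<le> r^n * B" using iter x by blast
    have "r^n * B \<le> r^n * (B+1)" using r by simp
    also have "\<dots> < e" using n B0 by (simp add: field_simps)
    finally show "\<exists>y\<in>K'. dist y x < e" using b by (metis dist_commute le_less_trans)
  qed
  then show "x \<in> K'" using closed_approachable[OF compact_imp_closed[OF K'(1)]] by blast
qed


lemma HT_compact: "sims r G \<Longrightarrow> compact A \<Longrightarrow> compact (HT G A)"
  unfolding HT_def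
proof (rule compact_UN)
  assume G: "sims r G" and A: "compact A"
  show "finite G" using G by (simp add: sims_def)
  fix g assume "g \<in> G"
  then obtain v where v: "g = (\<lambda>x. r *\<^sub>R x + v)" using G by (auto simp: sims_def)
  show "compact (g ` A)" unfolding v by (intro compact_continuous_image continuous_intros A)
qed

lemma HT_ne: "sims r G \<Longrightarrow> A \<noteq> {} \<Longrightarrow> HT G A \<noteq> {}"
  unfolding HT_def sims_def by auto

lemma F_nest:
  assumes "HT G I \<subseteq> I" and "m \<le> n"
  shows "(HT G ^^ n) I \<subseteq> (HT G ^^ m) I"
proof -
  have "(HT G ^^ Suc k) I \<subseteq> (HT G ^^ k) I" for k
  proof (induction k)
    case 0 then show ?case using assms(1) by simp
  next
    case (Suc k) then show ?case by (simp add: HT_mono)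
  qed
  then show ?thesis using lift_Suc_antimono_le[of "\<lambda>k. (HT G ^^ k) I"] assms(2) by blast
qed

lemma HT_exist:
  assumes G: "sims r G" and r: "0 < r" and I: "compact I" "I \<noteq> {}" "HT G I \<subseteq> I"
  defines "K0 \<equiv> \<Inter>(range (\<lambda>n. (HT G ^^ n) I))"
  shows "compact K0 \<and> K0 \<noteq> {} \<and> K0 = HT G K0"
proof -
  define F where "F n = (HT G ^^ n) I" for n
  have Fc: "compact (F n)" for n unfolding F_def
    by (induction n) (auto intro: HT_compact[OF G] I)
  have Fne: "F n \<noteq> {}" for n unfolding F_def
  proof (induction n)
    case 0 then show ?case using I(2) by simp
  next
    case (Suc n) then show ?case using HT_ne[OF G] by simp
  qed
  have Fn: "m \<le> n \<Longrightarrow> F n \<subseteq> F m" for m n unfolding F_def using F_nest[OF I(3)] by blast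
  have K0F: "K0 = \<Inter>(range F)" unfolding K0_def F_def by simp
  have c: "compact K0"
  proof -
    have "K0 = F 0 \<inter> K0" unfolding K0F by blast
    moreover have "closed K0" unfolding K0F using Fc by (intro closed_INT) (simp add: compact_imp_closed)
    ultimately show ?thesis using Fc[of 0] by (metis compact_Int_closed)
  qed
  have ne: "K0 \<noteq> {}" unfolding K0F by (rule compact_nest[OF Fc Fne Fn])
  have sub1: "HT G K0 \<subseteq> K0"
  proof -
    have "HT G K0 \<subseteq> F n" for n
    proof -
      have "HT G K0 \<subseteq> HT G (F n)" by (rule HT_mono) (auto simp: K0F)
      also have "\<dots> = F (Suc n)" by (simp add: F_def)
      also have "\<dots> \<subseteq> F n" by (rule Fn) simp
      finally show ?thesis .
    qed
    then show ?thesis unfolding K0F by blast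
  qed
  have sub2: "K0 \<subseteq> HT G K0"
  proof
    fix x assume x: "x \<in> K0"
    define N where "N g = {n. x \<in> g ` F n}" for g
    have "x \<in> F (Suc n)" for n using x K0F by blast
    then have "\<exists>g\<in>G. n \<in> N g" for n unfolding N_def F_def by (auto simp: HT_def)
    then have "UNIV = (\<Union>g\<in>G. N g)" by blast
    moreover have "finite G" using G by (simp add: sims_def)
    ultimately obtain g where g: "g \<in> G" "infinite (N g)"
      by (metis finite_UN infinite_UNIV_nat)
    obtain v where v: "g = (\<lambda>x. r *\<^sub>R x + v)" using G g by (auto simp: sims_def)
    define y where "y = (1/r) *\<^sub>R (x - v)"
    have gy: "g y = x" unfolding v y_def using r by simp
    have inj: "g z = x \<Longrightarrow> z = y" for z using gy unfolding v using r
      by (metis add_right_cancel scaleR_cancel_left order_less_irrefl)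
    have "y \<in> F m" for m
    proof -
      obtain n where n: "n \<ge> m" "n \<in> N g" using g(2) infinite_nat_iff_unbounded_le by blast
      then obtain z where "z \<in> F n" "x = g z" unfolding N_def by blast
      then have "y \<in> F n" using inj by metis
      then show ?thesis using Fn[OF n(1)] by blast
    qed
    then have "y \<in> K0" unfolding K0F by blast
    then show "x \<in> HT G K0" using g(1) gy unfolding HT_def by blast
  qed
  show ?thesis using c ne sub1 sub2 by blast
qed

theorem lemma1:
  fixes w :: "nat list"
  assumes "w \<noteq> []" and "set w \<subseteq> {0, 1}"
  shows "connected (Fset w) \<and> connected (Kset w)"
proof -
  have cF: "connected (Fset w)" using Qinv_Tword[OF Qinv_cube, of w] by (simp add: Fset_def Qinv_def)
  obtain G where G: "sims ((1/5)^length w) G" and TG: "\<And>A. Tword w A = HT G A"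
    using Tword_rep by blast
  define r :: real where "r = (1/5)^length w"
  have r: "0 < r" "r < 1" unfolding r_def using assms(1) by (auto simp: power_less_one_iff)
  have G': "sims r G" using G r_def by simp
  have I: "compact cubeI" "cubeI \<noteq> {}" "HT G cubeI \<subseteq> cubeI"
  proof -
    show "compact cubeI" by (simp add: cubeI_def)
    show "cubeI \<noteq> {}" using Qinv_cube by (auto simp: Qinv_def)
    have "Tword u cubeI \<subseteq> cubeI" for u
    proof (induction u)
      case Nil then show ?case by (simp add: Tword_def)
    next
      case (Cons a u)
      have "Tmap a (Tword u cubeI) \<subseteq> Tmap a cubeI" using Cons unfolding Tmap_def by blast
      then show ?case using Tmap_cube by (simp add: Tword_Cons) blast
    qed
    then show "HT G cubeI \<subseteq> cubeI" using TG by metis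
  qed
  define K0 where "K0 = \<Inter>(range (\<lambda>n. (HT G ^^ n) cubeI))"
  have K0: "compact K0" "K0 \<noteq> {}" "K0 = HT G K0"
    using HT_exist[OF G' r(1) I] unfolding K0_def by blast+
  have "Kset w = K0"
    unfolding Kset_def TG
  proof (rule the1_equality)
    show "compact K0 \<and> K0 \<noteq> {} \<and> K0 = HT G K0" using K0 by blast
    show "\<exists>!K. compact K \<and> K \<noteq> {} \<and> K = HT G K"
    proof (rule ex1I)
      show "compact K0 \<and> K0 \<noteq> {} \<and> K0 = HT G K0" using K0 by blast
      fix K assume K: "compact K \<and> K \<noteq> {} \<and> K = HT G K"
      show "K = K0"
        using HT_uniq[OF G' r, of K K0] HT_uniq[OF G' r, of K0 K] K K0 by blast
    qed
  qed
  moreover have "connected K0"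
    unfolding K0_def
  proof (rule connected_nest)
    fix n
    have c: "compact ((HT G ^^ n) cubeI)" by (induction n) (auto intro: HT_compact[OF G'] I)
    have "Qinv ((HT G ^^ n) cubeI)"
    proof (induction n)
      case 0 then show ?case using Qinv_cube by simp
    next
      case (Suc n) then show ?case using Qinv_Tword[of _ w] TG by simp
    qed
    then show "compact ((HT G ^^ n) cubeI)" "connected ((HT G ^^ n) cubeI)" using c by (auto simp: Qinv_def)
  next
    fix m n :: nat assume "m \<le> n"
    then show "(HT G ^^ n) cubeI \<subseteq> (HT G ^^ m) cubeI" using F_nest[OF I(3)] by blast
  qed
  ultimately show ?thesis using cF by simp
qed

end
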